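(* Let $\Gamma$ be a matching market and $\widehat\Gamma$ its induced continuum market. If $M$ is a stable integral matching in $\widehat\Gamma$, then the map $\mu$ defined by $\mu(w)=f$ and $w\in\mu(f)$ whenever $M_f(w)=1$ (for $w\in W$, $f\in\widetilde F$) is a stable matching in $\Gamma$.
   Context: Matching market $\Gamma$: finite firms $F$, finite workers $W=\{w_1,\dots,w_n\}$, null firm $\o$, $\widetilde F=F\cup\{\o\}$; each worker $w$ has a strict complete transitive preference $\succ_w$ over $\widetilde F$ ($f\succeq_w f'$ means $f\succ_w f'$ or $f=f'$); each firm $f\in F$ has a strict complete transitive preference $\succ_f$ over $2^W$; $Ch_f(S)$ is the $\succ_f$-best subset of $S$. A matching $\mu$ in $\Gamma$ assigns $\mu(w)\in\widetilde F$ and $\mu(f)\subseteq W$ with $\mu(w)=f\iff w\in\mu(f)$; it is stable if $\mu(w)\succeq_w\o$ for all $w$, $\mu(f)=Ch_f(\mu(f))$ for all $f\in F$, and there is no $f\in F$, $S\subseteq W$ with $f\succeq_w\mu(w)$ for all $w\in S$ and $S\succ_f\mu(f)$. Induced continuum market $\widehat\Gamma$: for each $f\in F$, list the sets $S\succ_f\emptyset$ as indicator vectors $\mathbf u^1\succ_f\cdots\succ_f\mathbf u^L$; for $\mathbf x\in[0,1]^W$ set $t_0=0$, $\mathbf z^0=\mathbf x$, $t_k=\min\{1-\sum_{j<k}t_j,\ z^{k-1}_i: u^k_i\ne0\}$, $\mathbf z^k=\mathbf z^{k-1}-t_k\mathbf u^k$ ($k=1,\dots,L$), and $\widehat{Ch}_f(\mathbf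 x)=\sum_k t_k\mathbf u^k$; also $\widehat{Ch}_{\o}(\mathbf x)=\mathbf x$. A matching in $\widehat\Gamma$ is $M=(M_f)_{f\in\widetilde F}$ with $M_f\in[0,1]^W$ and $\sum_{f\in\widetilde F}M_f(w)=1$ for all $w$; it is integral if all $M_f(w)\in\{0,1\}$. For $\mathbf x,\mathbf x'$, $\mathbf x\vee\mathbf x'$ is the componentwise maximum. Write $M'_f\succeq_f M_f$ if $M'_f=\widehat{Ch}_f(M'_f\vee M_f)$, and $M'_f\succ_f M_f$ if moreover $M'_f\ne M_f$. Let $A^{\preceq f}(M)(w)=\sum_{f'\in\widetilde F: f\succeq_w f'}M_{f'}(w)$. $M$ is stable if (i) $M_f=\widehat{Ch}_f(M_f)$ for every $f\in F$, and for all $w\in W$, $M_f(w)=0$ for every $f$ with $\o\succ_w f$; and (ii) there are no $f\in F$ and $M'_f\in[0,1]^W$ with $M'_f\succ_f M_f$ and $M'_f\le A^{\preceq f}(M)$. *)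

theory Defs
  imports Main "HOL-Library.Indicator_Function"
begin

text \<open>The extended firm set
  F~ = F \<union> {null} is encoded as 'f option, with None the null firm.
  Worker preferences pw w a b means a \<succ>_w b; firm preferences pf f S T means S \<succ>_f T.
  Vectors in [0,1]^W are functions 'w \<Rightarrow> real, valued in [0,1] on W and 0 off W.\<close>

definition strict_total_on :: "'a set \<Rightarrow> ('a \<Rightarrow> 'a \<Rightarrow> bool) \<Rightarrow> bool" where
  "strict_total_on A p \<longleftrightarrow>
     (\<forall>x\<in>A. \<not> p x x) \<and>
     (\<forall>x\<in>A. \<forall>y\<in>A. \<forall>z\<in>A. p x y \<longrightarrow> p y z \<longrightarrow> p x z) \<and>
     (\<forall>x\<in>A. \<forall>y\<in>A. x \<noteq> y \<longrightarrow> p x y \<or> p y x)"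

definition ext_firms :: "'f set \<Rightarrow> 'f option set" where
  "ext_firms F = insert None (Some ` F)"

definition market ::
  "'f set \<Rightarrow> 'w set \<Rightarrow> ('w \<Rightarrow> 'f option \<Rightarrow> 'f option \<Rightarrow> bool) \<Rightarrow> ('f \<Rightarrow> 'w set \<Rightarrow> 'w set \<Rightarrow> bool) \<Rightarrow> bool" where
  "market F W pw pf \<longleftrightarrow> finite F \<and> finite W \<and>
     (\<forall>w\<in>W. strict_total_on (ext_firms F) (pw w)) \<and>
     (\<forall>f\<in>F. strict_total_on (Pow W) (pf f))"

definition weak_pref :: "('a \<Rightarrow> 'a \<Rightarrow> bool) \<Rightarrow> 'a \<Rightarrow> 'a \<Rightarrow> bool" where
  "weak_pref p a b \<longleftrightarrow> p a b \<or> a = b"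

definition Ch :: "('f \<Rightarrow> 'w set \<Rightarrow> 'w set \<Rightarrow> bool) \<Rightarrow> 'f \<Rightarrow> 'w set \<Rightarrow> 'w set" where
  "Ch pf f S = (THE T. T \<subseteq> S \<and> (\<forall>T'. T' \<subseteq> S \<longrightarrow> T' \<noteq> T \<longrightarrow> pf f T T'))"

text \<open>Discrete matching: mu w is the firm of worker w; mu(f) is derived.\<close>
definition assigned :: "'w set \<Rightarrow> ('w \<Rightarrow> 'f option) \<Rightarrow> 'f \<Rightarrow> 'w set" where
  "assigned W mu f = {w \<in> W. mu w = Some f}"

definition is_matching :: "'f set \<Rightarrow> 'w set \<Rightarrow> ('w \<Rightarrow> 'f option) \<Rightarrow> bool" where
  "is_matching F W mu \<longleftrightarrow> (\<forall>w\<in>W. mu w \<in> ext_firms F)"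

definition stable_discrete ::
  "'f set \<Rightarrow> 'w set \<Rightarrow> ('w \<Rightarrow> 'f option \<Rightarrow> 'f option \<Rightarrow> bool) \<Rightarrow> ('f \<Rightarrow> 'w set \<Rightarrow> 'w set \<Rightarrow> bool)
    \<Rightarrow> ('w \<Rightarrow> 'f option) \<Rightarrow> bool" where
  "stable_discrete F W pw pf mu \<longleftrightarrow>
     (\<forall>w\<in>W. weak_pref (pw w) (mu w) None) \<and>
     (\<forall>f\<in>F. assigned W mu f = Ch pf f (assigned W mu f)) \<and>
     \<not> (\<exists>f\<in>F. \<exists>S. S \<subseteq> W \<and> (\<forall>w\<in>S. weak_pref (pw w) (Some f) (mu w)) \<and>
                     pf f S (assigned W mu f))"

definition accept_list :: "'w set \<Rightarrow> ('f \<Rightarrow> 'w set \<Rightarrow> 'w set \<Rightarrow> bool) \<Rightarrow> 'f \<Rightarrow> 'w set list" where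
  "accept_list W pf f = (THE L. distinct L \<and> set L = {S. S \<subseteq> W \<and> pf f S {}} \<and> sorted_wrt (pf f) L)"

text \<open>The greedy procedure: r = 1 - sum of previous t_j, z = current residual.
  t = min({r} \<union> {z i. i \<in> S}); output sum of t_k u^k.\<close>
fun greedy :: "'w set list \<Rightarrow> real \<Rightarrow> ('w \<Rightarrow> real) \<Rightarrow> ('w \<Rightarrow> real)" where
  "greedy [] r z = (\<lambda>_. 0)"
| "greedy (S # Ss) r z =
     (let t = Min (insert r (z ` S))
      in (\<lambda>i. t * indicator S i + greedy Ss (r - t) (\<lambda>j. z j - t * indicator S j) i))"

definition hCh :: "'w set \<Rightarrow> ('f \<Rightarrow> 'w set \<Rightarrow> 'w set \<Rightarrow> bool) \<Rightarrow> 'f \<Rightarrow> ('w \<Rightarrow> real) \<Rightarrow> ('w \<Rightarrow> real)" where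
  "hCh W pf f x = greedy (accept_list W pf f) 1 x"

definition unit_vecs :: "'w set \<Rightarrow> ('w \<Rightarrow> real) set" where
  "unit_vecs W = {x. (\<forall>w\<in>W. 0 \<le> x w \<and> x w \<le> 1) \<and> (\<forall>w. w \<notin> W \<longrightarrow> x w = 0)}"

definition cont_matching :: "'f set \<Rightarrow> 'w set \<Rightarrow> ('f option \<Rightarrow> 'w \<Rightarrow> real) \<Rightarrow> bool" where
  "cont_matching F W M \<longleftrightarrow> (\<forall>g\<in>ext_firms F. M g \<in> unit_vecs W) \<and>
     (\<forall>w\<in>W. (\<Sum>g\<in>ext_firms F. M g w) = 1)"

definition integral_matching :: "'f set \<Rightarrow> 'w set \<Rightarrow> ('f option \<Rightarrow> 'w \<Rightarrow> real) \<Rightarrow> bool" where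
  "integral_matching F W M \<longleftrightarrow> (\<forall>g\<in>ext_firms F. \<forall>w\<in>W. M g w = 0 \<or> M g w = 1)"

definition vmax :: "('w \<Rightarrow> real) \<Rightarrow> ('w \<Rightarrow> real) \<Rightarrow> ('w \<Rightarrow> real)" where
  "vmax x y = (\<lambda>w. max (x w) (y w))"

definition cont_weak_pref :: "'w set \<Rightarrow> ('f \<Rightarrow> 'w set \<Rightarrow> 'w set \<Rightarrow> bool) \<Rightarrow> 'f \<Rightarrow> ('w \<Rightarrow> real) \<Rightarrow> ('w \<Rightarrow> real) \<Rightarrow> bool" where
  "cont_weak_pref W pf f x y \<longleftrightarrow> x = hCh W pf f (vmax x y)"

definition cont_strict_pref :: "'w set \<Rightarrow> ('f \<Rightarrow> 'w set \<Rightarrow> 'w set \<Rightarrow> bool) \<Rightarrow> 'f \<Rightarrow> ('w \<Rightarrow> real) \<Rightarrow> ('w \<Rightarrow> real) \<Rightarrow> bool" where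
  "cont_strict_pref W pf f x y \<longleftrightarrow> cont_weak_pref W pf f x y \<and> x \<noteq> y"

definition A_below :: "'f set \<Rightarrow> ('w \<Rightarrow> 'f option \<Rightarrow> 'f option \<Rightarrow> bool) \<Rightarrow> 'f \<Rightarrow> ('f option \<Rightarrow> 'w \<Rightarrow> real) \<Rightarrow> 'w \<Rightarrow> real" where
  "A_below F pw f M w = (\<Sum>g\<in>{g\<in>ext_firms F. weak_pref (pw w) (Some f) g}. M g w)"

definition stable_cont ::
  "'f set \<Rightarrow> 'w set \<Rightarrow> ('w \<Rightarrow> 'f option \<Rightarrow> 'f option \<Rightarrow> bool) \<Rightarrow> ('f \<Rightarrow> 'w set \<Rightarrow> 'w set \<Rightarrow> bool)
    \<Rightarrow> ('f option \<Rightarrow> 'w \<Rightarrow> real) \<Rightarrow> bool" where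
  "stable_cont F W pw pf M \<longleftrightarrow>
     (\<forall>f\<in>F. M (Some f) = hCh W pf f (M (Some f))) \<and>
     (\<forall>w\<in>W. \<forall>f\<in>F. pw w None (Some f) \<longrightarrow> M (Some f) w = 0) \<and>
     \<not> (\<exists>f\<in>F. \<exists>M'\<in>unit_vecs W. cont_strict_pref W pf f M' (M (Some f)) \<and>
                 (\<forall>w\<in>W. M' w \<le> A_below F pw f M w))"

end

theory Submission imports Defs begin

lemma greedy_zero:
  "(\<forall>S\<in>set L. finite S) \<Longrightarrow> (\<forall>j. z j \<ge> 0) \<Longrightarrow> greedy L 0 z = (\<lambda>_. 0)"
proof (induction L arbitrary: z)
  case Nil then show ?case by simp
next
  case (Cons S Ss)
  have "Min (insert 0 (z ` S)) = 0"
    using Cons.prems by (intro Min_eqI) auto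
  then show ?case using Cons by (simp add: Let_def)
qed

lemma greedy_ind:
  "(\<forall>S\<in>set L. finite S) \<Longrightarrow> greedy L 1 (indicator X) =
     (case find (\<lambda>T. T \<subseteq> X) L of None \<Rightarrow> (\<lambda>_. 0) | Some T \<Rightarrow> indicator T)"
proof (induction L)
  case Nil then show ?case by simp
next
  case (Cons S Ss)
  show ?case
  proof (cases "S \<subseteq> X")
    case True
    have m: "Min (insert 1 ((indicator X :: _ \<Rightarrow> real) ` S)) = 1"
      using Cons.prems True by (intro Min_eqI) (auto simp: indicator_def)
    have z: "greedy Ss 0 (\<lambda>j. (indicator X j :: real) - 1 * indicator S j) = (\<lambda>_. 0)"
      using Cons.prems True by (intro greedy_zero) (auto simp: indicator_def)
    show ?thesis using True m z by (simp add: Let_def)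
  next
    case False
    then obtain s where s: "s \<in> S" "s \<notin> X" by blast
    have m: "Min (insert 1 ((indicator X :: _ \<Rightarrow> real) ` S)) = 0"
      using Cons.prems s by (intro Min_eqI) (auto simp: indicator_def)
    show ?thesis using False m Cons by (simp add: Let_def)
  qed
qed

lemma find_sorted:
  "sorted_wrt p L \<Longrightarrow> distinct L \<Longrightarrow> find P L = Some T \<Longrightarrow> T' \<in> set L \<Longrightarrow> P T' \<Longrightarrow> T' \<noteq> T \<Longrightarrow> p T T'"
  by (induction L) (auto split: if_splits simp: find_Some_iff)

lemma find_mono:
  "find P L = Some x \<Longrightarrow> (\<forall>y. Q y \<longrightarrow> P y) \<Longrightarrow> Q x \<Longrightarrow> find Q L = Some x"
  by (induction L) (auto split: if_splits)

lemma sorted_exists: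
  assumes "strict_total_on A p" "finite B" "B \<subseteq> A"
  shows "\<exists>L. distinct L \<and> set L = B \<and> sorted_wrt p L"
  using assms(2,3)
proof (induction "card B" arbitrary: B)
  case 0 then show ?case by auto
next
  case (Suc n)
  then have ne: "B \<noteq> {}" by auto
  have "\<exists>m\<in>B. \<forall>y\<in>B. y \<noteq> m \<longrightarrow> p m y"
    using Suc.prems(1) ne Suc.prems(2)
  proof (induction B rule: finite_ne_induct)
    case (singleton x) then show ?case by auto
  next
    case (insert x B)
    then obtain m where m: "m \<in> B" "\<forall>y\<in>B. y \<noteq> m \<longrightarrow> p m y" by auto
    show ?case
    proof (cases "p x m")
      case True
      then show ?thesis using m insert assms(1) unfolding strict_total_on_def
        by (metis insert_iff subsetD insert.prems)
    next
      case False
      then have "p m x" using m insert assms(1) unfolding strict_total_on_def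
        by (metis insert_iff subsetD insert.prems)
      then show ?thesis using m by auto
    qed
  qed
  then obtain m where m: "m \<in> B" "\<forall>y\<in>B. y \<noteq> m \<longrightarrow> p m y" by auto
  obtain L where L: "distinct L" "set L = B - {m}" "sorted_wrt p L"
  proof -
    have "n = card (B - {m})" using Suc.hyps(2) Suc.prems m by simp
    then show ?thesis using Suc.hyps(1)[of "B - {m}"] Suc.prems that by auto
  qed
  show ?case using L m by (intro exI[of _ "m # L"]) auto
qed

lemma sorted_unique:
  assumes "strict_total_on A p"
  shows "set L1 \<subseteq> A \<Longrightarrow> distinct L1 \<Longrightarrow> sorted_wrt p L1 \<Longrightarrow> distinct L2 \<Longrightarrow> sorted_wrt p L2
     \<Longrightarrow> set L1 = set L2 \<Longrightarrow> L1 = L2"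
proof (induction L1 arbitrary: L2)
  case Nil then show ?case by auto
next
  case (Cons a L1)
  then obtain b L2' where b: "L2 = b # L2'" by (cases L2) auto
  have "a = b"
  proof (rule ccontr)
    assume "a \<noteq> b"
    then have "p a b" "p b a" using Cons.prems b by auto
    then show False using assms Cons.prems b unfolding strict_total_on_def by (metis list.set_intros(1) subsetD)
  qed
  then have "set L1 = set L2'" using Cons.prems b by auto
  then show ?case using Cons b \<open>a = b\<close> by auto
qed

lemma accept_list_props:
  assumes "strict_total_on (Pow W) (pf f)" "finite W"
  shows "distinct (accept_list W pf f) \<and> set (accept_list W pf f) = {S. S \<subseteq> W \<and> pf f S {}}
     \<and> sorted_wrt (pf f) (accept_list W pf f)"
proof -
  have fin: "finite {S. S \<subseteq> W \<and> pf f S {}}" using assms(2) by auto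
  obtain L where L: "distinct L \<and> set L = {S. S \<subseteq> W \<and> pf f S {}} \<and> sorted_wrt (pf f) L"
    using sorted_exists[OF assms(1) fin] by auto
  have "\<exists>!L. distinct L \<and> set L = {S. S \<subseteq> W \<and> pf f S {}} \<and> sorted_wrt (pf f) L"
  proof (rule ex1I[of _ L])
    show "distinct L \<and> set L = {S. S \<subseteq> W \<and> pf f S {}} \<and> sorted_wrt (pf f) L" using L .
  next
    fix y assume "distinct y \<and> set y = {S. S \<subseteq> W \<and> pf f S {}} \<and> sorted_wrt (pf f) y"
    then show "y = L" using L sorted_unique[OF assms(1), of y L] by auto
  qed
  then show ?thesis unfolding accept_list_def by (rule theI')
qed

lemma Ch_eq:
  assumes "strict_total_on (Pow W) (pf f)" "S \<subseteq> W" "T \<subseteq> S"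
    "\<forall>T'. T' \<subseteq> S \<longrightarrow> T' \<noteq> T \<longrightarrow> pf f T T'"
  shows "Ch pf f S = T"
  unfolding Ch_def
proof (rule the_equality)
  show "T \<subseteq> S \<and> (\<forall>T'. T' \<subseteq> S \<longrightarrow> T' \<noteq> T \<longrightarrow> pf f T T')" using assms by auto
next
  fix T2 assume h: "T2 \<subseteq> S \<and> (\<forall>T'. T' \<subseteq> S \<longrightarrow> T' \<noteq> T2 \<longrightarrow> pf f T2 T')"
  show "T2 = T"
  proof (rule ccontr)
    assume "T2 \<noteq> T"
    then have "pf f T T2" "pf f T2 T" using h assms by auto
    then show False using assms h unfolding strict_total_on_def
      by (metis Pow_iff order_trans)
  qed
qed

lemma ind_inj: "(indicator A :: 'a \<Rightarrow> real) = indicator B \<Longrightarrow> A = B"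
  by (metis indicator_eq_1_iff one_neq_zero set_eqI)

lemma ind_zero: "(indicator A :: 'a \<Rightarrow> real) = (\<lambda>_. 0) \<Longrightarrow> A = {}"
  by (metis empty_iff equals0I indicator_simps(1) one_neq_zero)

theorem lemma2:
  fixes F :: "'f set" and W :: "'w set"
    and pw :: "'w \<Rightarrow> 'f option \<Rightarrow> 'f option \<Rightarrow> bool"
    and pf :: "'f \<Rightarrow> 'w set \<Rightarrow> 'w set \<Rightarrow> bool"
    and M :: "'f option \<Rightarrow> 'w \<Rightarrow> real"
    and mu :: "'w \<Rightarrow> 'f option"
  assumes "market F W pw pf"
    and "cont_matching F W M"
    and "integral_matching F W M"
    and "stable_cont F W pw pf M"
    and "\<forall>w\<in>W. \<forall>g\<in>ext_firms F. M g w = 1 \<longrightarrow> mu w = g"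
  shows "is_matching F W mu \<and> stable_discrete F W pw pf mu"
proof -
  note mk = assms(1)[unfolded market_def]
  have finF: "finite (ext_firms F)" using mk by (simp add: ext_firms_def)
  have unit: "\<And>g. g \<in> ext_firms F \<Longrightarrow> M g \<in> unit_vecs W" using assms(2) by (simp add: cont_matching_def)
  have nonneg: "\<And>g w. g \<in> ext_firms F \<Longrightarrow> M g w \<ge> 0"
    using unit unfolding unit_vecs_def by (metis (mono_tags, lifting) mem_Collect_eq order_refl)
  have ex1: "\<exists>g\<in>ext_firms F. M g w = 1" if w: "w \<in> W" for w
  proof (rule ccontr)
    assume "\<not> ?thesis"
    then have "\<forall>g\<in>ext_firms F. M g w = 0" using assms(3) w by (auto simp: integral_matching_def)
    then have "(\<Sum>g\<in>ext_firms F. M g w) = 0" by simp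
    then show False using assms(2) w by (simp add: cont_matching_def)
  qed
  have mu_in: "mu w \<in> ext_firms F \<and> M (mu w) w = 1" if w: "w \<in> W" for w
    using ex1[OF w] assms(5) w by metis
  have Mf_ind: "M (Some f) = indicator (assigned W mu f)" if f: "f \<in> F" for f
  proof
    fix w
    have sf: "Some f \<in> ext_firms F" using f by (simp add: ext_firms_def)
    show "M (Some f) w = indicator (assigned W mu f) w"
    proof (cases "w \<in> W")
      case False
      then show ?thesis using unit[OF sf] by (simp add: unit_vecs_def assigned_def)
    next
      case True
      then show ?thesis using assms(3) sf assms(5) mu_in[OF True]
        by (auto simp: integral_matching_def assigned_def indicator_def)
    qed
  qed
  have ptot: "strict_total_on (Pow W) (pf f)" if "f \<in> F" for f using mk that by auto
  have AL: "distinct (accept_list W pf f) \<and> set (accept_list W pf f) = {S. S \<subseteq> W \<and> pf f S {}}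
     \<and> sorted_wrt (pf f) (accept_list W pf f)" if "f \<in> F" for f
    using accept_list_props[of W pf f] ptot[OF that] mk by auto
  have hChI: "hCh W pf f (indicator X) = (case find (\<lambda>T. T \<subseteq> X) (accept_list W pf f) of
      None \<Rightarrow> (\<lambda>_. 0) | Some T \<Rightarrow> indicator T)" if "f \<in> F" for f X
    unfolding hCh_def
  proof (rule greedy_ind)
    show "\<forall>S\<in>set (accept_list W pf f). finite S" using AL[OF that] mk finite_subset by auto
  qed
  have Acase: "assigned W mu f = {} \<or> (pf f (assigned W mu f) {} \<and>
      (\<forall>T'. T' \<subseteq> assigned W mu f \<longrightarrow> T' \<noteq> assigned W mu f \<longrightarrow> pf f (assigned W mu f) T'))"
    if f: "f \<in> F" for f
  proof -
    let ?A = "assigned W mu f"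
    let ?L = "accept_list W pf f"
    have AW: "?A \<subseteq> W" by (auto simp: assigned_def)
    have fixp: "indicator ?A = hCh W pf f (indicator ?A)"
      using assms(4) f Mf_ind[OF f] unfolding stable_cont_def by metis
    show ?thesis
    proof (cases "find (\<lambda>T. T \<subseteq> ?A) ?L")
      case None
      then show ?thesis using fixp hChI[OF f, of ?A] ind_zero by auto
    next
      case (Some T)
      then have "indicator ?A = (indicator T :: 'w \<Rightarrow> real)" using fixp hChI[OF f, of ?A] by auto
      then have TA: "T = ?A" using ind_inj by metis
      have Tin: "T \<in> set ?L" using Some by (auto simp: find_Some_iff)
      then have acc: "pf f ?A {}" using AL[OF f] TA by auto
      have "pf f ?A T'" if T': "T' \<subseteq> ?A" "T' \<noteq> ?A" for T'
      proof (cases "pf f T' {}")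
        case True
        then have "T' \<in> set ?L" using AL[OF f] T' AW by auto
        then show ?thesis using find_sorted[of "pf f" ?L "\<lambda>T. T \<subseteq> ?A" T T'] AL[OF f] Some T' TA by auto
      next
        case False
        show ?thesis
        proof (cases "T' = {}")
          case True then show ?thesis using acc by simp
        next
          case ne: False
          then have "pf f {} T'" using ptot[OF f] False T' AW unfolding strict_total_on_def
            by (metis Pow_iff empty_subsetI order_trans)
          then show ?thesis using acc ptot[OF f] T' AW unfolding strict_total_on_def
            by (metis Pow_iff empty_subsetI order_trans)
        qed
      qed
      then show ?thesis using acc by auto
    qed
  qed
  have part1: "is_matching F W mu" using mu_in by (simp add: is_matching_def)
  have part2: "\<forall>w\<in>W. weak_pref (pw w) (mu w) None"
  proof
    fix w assume w: "w \<in> W"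
    show "weak_pref (pw w) (mu w) None"
    proof (cases "mu w")
      case None then show ?thesis by (simp add: weak_pref_def)
    next
      case (Some f)
      then have f: "f \<in> F" using mu_in[OF w] by (auto simp: ext_firms_def)
      have "M (Some f) w = 1" using mu_in[OF w] Some by simp
      then have "\<not> pw w None (Some f)" using assms(4) w f by (auto simp: stable_cont_def)
      moreover have "None \<in> ext_firms F" "Some f \<in> ext_firms F" using f by (auto simp: ext_firms_def)
      ultimately have "pw w (Some f) None" using mk w unfolding strict_total_on_def
        by (metis option.distinct(1))
      then show ?thesis using Some by (simp add: weak_pref_def)
    qed
  qed
  have part3: "\<forall>f\<in>F. assigned W mu f = Ch pf f (assigned W mu f)"
  proof
    fix f assume f: "f \<in> F"
    have AW: "assigned W mu f \<subseteq> W" by (auto simp: assigned_def)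
    show "assigned W mu f = Ch pf f (assigned W mu f)"
      using Acase[OF f] Ch_eq[of W pf f "assigned W mu f"] ptot[OF f] AW by auto
  qed
  have part4: "\<not> (\<exists>f\<in>F. \<exists>S. S \<subseteq> W \<and> (\<forall>w\<in>S. weak_pref (pw w) (Some f) (mu w)) \<and>
                     pf f S (assigned W mu f))"
  proof
    assume "\<exists>f\<in>F. \<exists>S. S \<subseteq> W \<and> (\<forall>w\<in>S. weak_pref (pw w) (Some f) (mu w)) \<and>
                     pf f S (assigned W mu f)"
    then obtain f S where f: "f \<in> F" and SW: "S \<subseteq> W" and Sw: "\<forall>w\<in>S. weak_pref (pw w) (Some f) (mu w)"
      and SA: "pf f S (assigned W mu f)" by blast
    let ?A = "assigned W mu f"
    let ?L = "accept_list W pf f"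
    have AW: "?A \<subseteq> W" by (auto simp: assigned_def)
    have Sacc: "pf f S {}"
    proof (cases "?A = {}")
      case True then show ?thesis using SA by simp
    next
      case False
      then have "pf f ?A {}" using Acase[OF f] by auto
      then show ?thesis using SA ptot[OF f] AW SW unfolding strict_total_on_def
        by (metis Pow_iff empty_subsetI)
    qed
    then have SL: "S \<in> set ?L" using AL[OF f] SW by auto
    have "find (\<lambda>T. T \<subseteq> S \<union> ?A) ?L \<noteq> None" using SL by (auto simp: find_None_iff)
    then obtain T where T: "find (\<lambda>T. T \<subseteq> S \<union> ?A) ?L = Some T" by auto
    have TL: "T \<in> set ?L" and TU: "T \<subseteq> S \<union> ?A" using T by (auto simp: find_Some_iff)
    have TW: "T \<subseteq> W" using TL AL[OF f] by auto
    have TS: "T = S \<or> pf f T S"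
      using find_sorted[of "pf f" ?L "\<lambda>T. T \<subseteq> S \<union> ?A" T S] AL[OF f] T SL by auto
    have TneA: "T \<noteq> ?A"
    proof
      assume "T = ?A"
      then show False using TS SA ptot[OF f] AW SW unfolding strict_total_on_def
        by (metis Pow_iff)
    qed
    define M' where "M' = (indicator T :: 'w \<Rightarrow> real)"
    have M'u: "M' \<in> unit_vecs W" using TW by (auto simp: M'_def unit_vecs_def indicator_def)
    have vm: "vmax M' (M (Some f)) = indicator (T \<union> ?A)"
      by (auto simp: M'_def Mf_ind[OF f] vmax_def indicator_def)
    have "find (\<lambda>T'. T' \<subseteq> T \<union> ?A) ?L = Some T"
      using find_mono[OF T, of "\<lambda>T'. T' \<subseteq> T \<union> ?A"] TU by auto
    then have wp: "cont_weak_pref W pf f M' (M (Some f))"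
      unfolding cont_weak_pref_def vm using hChI[OF f, of "T \<union> ?A"] by (simp add: M'_def)
    have ne: "M' \<noteq> M (Some f)" using TneA ind_inj unfolding M'_def Mf_ind[OF f] by metis
    have below: "\<forall>w\<in>W. M' w \<le> A_below F pw f M w"
    proof
      fix w assume w: "w \<in> W"
      have fin: "finite {g \<in> ext_firms F. weak_pref (pw w) (Some f) g}" using finF by simp
      have nn: "A_below F pw f M w \<ge> 0" unfolding A_below_def
        using nonneg by (intro sum_nonneg) auto
      show "M' w \<le> A_below F pw f M w"
      proof (cases "w \<in> T")
        case False then show ?thesis using nn by (simp add: M'_def)
      next
        case True
        then have "weak_pref (pw w) (Some f) (mu w)"
          using TU Sw by (auto simp: assigned_def weak_pref_def)
        then have mem: "mu w \<in> {g \<in> ext_firms F. weak_pref (pw w) (Some f) g}" using mu_in[OF w] by auto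
        have "M (mu w) w \<le> A_below F pw f M w" unfolding A_below_def
          using member_le_sum[OF mem, of "\<lambda>g. M g w"] fin nonneg by auto
        then show ?thesis using mu_in[OF w] True by (simp add: M'_def)
      qed
    qed
    show False using assms(4) f M'u wp ne below unfolding stable_cont_def cont_strict_pref_def by blast
  qed
  show ?thesis using part1 part2 part3 part4 by (simp add: stable_discrete_def)
qed

end
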